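(* Let $V$ be a unital JB-algebra, $a$ a projection in $V$ and $u$ a tripotent in $V_{1/2}(a)$. Then: (i) $p:=au^2$ is a projection satisfying $p\le a$, $u\in V_{1/2}(p)$ and $pu^2=p$; (ii) if $u\neq0$ then $p\neq0$; (iii) if $u$ and $v$ are orthogonal tripotents in $V_{1/2}(a)$, then $p:=au^2$ and $q:=av^2$ are orthogonal projections ($pq=0$) and $pv=uq=0$.
   Context: Products are the Jordan product of $V$, written by juxtaposition. The triple product is $\{xyz\}=(xy)z-(zx)y+(yz)x$. A projection is an idempotent $p=p^2$; $p\le a$ is the usual order of projections. A tripotent is $u$ with $\{uuu\}=u$. $V_{1/2}(a)=\{x: ax=\frac12x\}$. Tripotents $u,v$ are orthogonal if $\{uvv\}=0$ (equivalently $\{uuv\}=0$). *)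

theory Defs
  imports "HOL-Analysis.Analysis"
begin

definition jordan_algebra :: "('a::real_vector \<Rightarrow> 'a \<Rightarrow> 'a) \<Rightarrow> bool" where
  "jordan_algebra jp \<longleftrightarrow>
     bilinear jp \<and>
     (\<forall>x y. jp x y = jp y x) \<and>
     (\<forall>x y. jp (jp x y) (jp x x) = jp x (jp y (jp x x)))"

definition JB_algebra :: "('a::banach \<Rightarrow> 'a \<Rightarrow> 'a) \<Rightarrow> bool" where
  "JB_algebra jp \<longleftrightarrow>
     jordan_algebra jp \<and>
     (\<forall>x y. norm (jp x y) \<le> norm x * norm y) \<and>
     (\<forall>x. norm (jp x x) = (norm x)\<^sup>2) \<and>
     (\<forall>x y. norm (jp x x) \<le> norm (jp x x + jp y y))"

definition unital_JB_algebra :: "('a::banach \<Rightarrow> 'a \<Rightarrow> 'a) \<Rightarrow> 'a \<Rightarrow> bool" where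
  "unital_JB_algebra jp e \<longleftrightarrow> JB_algebra jp \<and> (\<forall>x. jp e x = x)"

definition triple :: "('a::real_vector \<Rightarrow> 'a \<Rightarrow> 'a) \<Rightarrow> 'a \<Rightarrow> 'a \<Rightarrow> 'a \<Rightarrow> 'a" where
  "triple jp x y z = jp (jp x y) z - jp (jp z x) y + jp (jp y z) x"

definition projection :: "('a::real_vector \<Rightarrow> 'a \<Rightarrow> 'a) \<Rightarrow> 'a \<Rightarrow> bool" where
  "projection jp p \<longleftrightarrow> jp p p = p"

definition proj_le :: "('a::real_vector \<Rightarrow> 'a \<Rightarrow> 'a) \<Rightarrow> 'a \<Rightarrow> 'a \<Rightarrow> bool" where
  "proj_le jp p q \<longleftrightarrow> jp p q = p"

definition tripotent :: "('a::real_vector \<Rightarrow> 'a \<Rightarrow> 'a) \<Rightarrow> 'a \<Rightarrow> bool" where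
  "tripotent jp u \<longleftrightarrow> triple jp u u u = u"

definition half_space :: "('a::real_vector \<Rightarrow> 'a \<Rightarrow> 'a) \<Rightarrow> 'a \<Rightarrow> 'a set" where
  "half_space jp a = {x. jp a x = (1/2) *\<^sub>R x}"

definition orth_trip :: "('a::real_vector \<Rightarrow> 'a \<Rightarrow> 'a) \<Rightarrow> 'a \<Rightarrow> 'a \<Rightarrow> bool" where
  "orth_trip jp u v \<longleftrightarrow> triple jp u v v = 0"

end

theory Submission
  imports Defs
begin

lemma aux_lin:
  fixes A B C D E F G H :: "'a::real_vector"
  assumes "A + (A + (B + (C + (D + D)))) = E + (E + (F + (G + (H + H))))"
    and "F + (H + (H + (A + (A + C)))) = E + (E + (G + (B + (D + D))))"
  shows "B + 2 *\<^sub>R D = F + 2 *\<^sub>R H"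
proof -
  have z: "(A + (A + (B + (C + (D + D)))) - (E + (E + (F + (G + (H + H))))))
     - ((F + (H + (H + (A + (A + C))))) - (E + (E + (G + (B + (D + D)))))) = 0"
    using assms by simp
  have "2 *\<^sub>R ((B + 2 *\<^sub>R D) - (F + 2 *\<^sub>R H)) =
     (A + (A + (B + (C + (D + D)))) - (E + (E + (F + (G + (H + H))))))
     - ((F + (H + (H + (A + (A + C))))) - (E + (E + (G + (B + (D + D))))))"
    by (simp add: scaleR_2 algebra_simps)
  with z have "2 *\<^sub>R ((B + 2 *\<^sub>R D) - (F + 2 *\<^sub>R H)) = 0" by simp
  then show ?thesis by simp
qed

lemma D1:
  fixes jp :: "'a::real_vector \<Rightarrow> 'a \<Rightarrow> 'a"
  assumes J: "jordan_algebra jp"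
  shows "jp (jp w y) (jp x x) + 2 *\<^sub>R jp (jp x y) (jp x w) - jp w (jp y (jp x x)) - 2 *\<^sub>R jp x (jp y (jp x w)) = 0"
proof -
  have B: "bilinear jp" and C: "\<And>x y. jp x y = jp y x"
    and Jd: "\<And>x y. jp (jp x y) (jp x x) = jp x (jp y (jp x x))"
    using J unfolding jordan_algebra_def by auto
  note lin = bilinear_ladd[OF B] bilinear_radd[OF B] bilinear_lsub[OF B] bilinear_rsub[OF B]
     bilinear_lmul[OF B] bilinear_rmul[OF B]
  have c1: "jp x w = jp w x" by (rule C)
  have e1: "jp (jp (x+w) y) (jp (x+w) (x+w)) - jp (x+w) (jp y (jp (x+w) (x+w))) = 0" using Jd by simp
  have e2: "jp (jp (x-w) y) (jp (x-w) (x-w)) - jp (x-w) (jp y (jp (x-w) (x-w))) = 0" using Jd by simp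
  have e3: "jp (jp x y) (jp x x) - jp x (jp y (jp x x)) = 0" using Jd by simp
  have e4: "jp (jp w y) (jp w w) - jp w (jp y (jp w w)) = 0" using Jd by simp
  from e1 e2 e3 e4 have "jp (jp w y) (jp x x) + 2 *\<^sub>R jp (jp x y) (jp w x) =
        jp w (jp y (jp x x)) + 2 *\<^sub>R jp x (jp y (jp w x))"
    apply (simp add: lin c1 algebra_simps)
    apply (erule (1) aux_lin)
    done
  then show ?thesis by (simp add: c1 algebra_simps)
qed

lemma D1':
  fixes jp :: "'a::real_vector \<Rightarrow> 'a \<Rightarrow> 'a"
  assumes J: "jordan_algebra jp"
  shows "jp (jp w y) (jp x x) + 2 *\<^sub>R jp (jp x y) (jp x w) = jp w (jp y (jp x x)) + 2 *\<^sub>R jp x (jp y (jp x w))"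
  using D1[OF J, of w y x] by (simp add: algebra_simps)

lemma jbasic:
  fixes jp :: "'a::real_vector \<Rightarrow> 'a \<Rightarrow> 'a"
  assumes J: "jordan_algebra jp"
  shows "bilinear jp" "\<And>x y. jp x y = jp y x"
    "\<And>x y. jp (jp x y) (jp x x) = jp x (jp y (jp x x))"
  using J unfolding jordan_algebra_def by auto

lemma peirceA:
  fixes jp :: "'a::real_vector \<Rightarrow> 'a \<Rightarrow> 'a"
  assumes J: "jordan_algebra jp" and f: "jp f f = f" and x: "jp f x = 0" and y: "jp f y = y"
  shows "jp x y = 0"
proof -
  note B = jbasic(1)[OF J] and C = jbasic(2)[OF J]
  have z1: "\<And>z. jp 0 z = 0" "\<And>z. jp z 0 = 0"
    using bilinear_lzero[OF B] bilinear_rzero[OF B] by auto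
  have yf: "jp y f = y" using y C by metis
  have xf: "jp x f = 0" using x C by metis
  have h1: "jp f (jp x y) = jp x y"
    using D1'[OF J, of x y f] by (simp add: f y x yf z1 C[of "jp x y" f])
  have h2: "jp f (jp x y) = 2 *\<^sub>R jp f (jp x y)"
    using D1'[OF J, of y x f] by (simp add: f y x xf z1 C[of "jp y x" f] C[of y x] C[of "jp x y" f])
  from h1 h2 show ?thesis by (metis scaleR_2 add_cancel_right_right)
qed

lemma commL:
  fixes jp :: "'a::real_vector \<Rightarrow> 'a \<Rightarrow> 'a"
  assumes J: "jordan_algebra jp" and au: "jp a u = (1/2) *\<^sub>R u"
  shows "jp (jp a y) (jp u u) = jp a (jp y (jp u u))"
proof -
  note B = jbasic(1)[OF J] and C = jbasic(2)[OF J]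
  have ua: "jp u a = (1/2) *\<^sub>R u" using au C by metis
  show ?thesis
    using D1'[OF J, of a y u] by (simp add: ua bilinear_rmul[OF B] C[of "jp u y" u] C[of y u])
qed

lemma trip_basic:
  fixes jp :: "'a::real_vector \<Rightarrow> 'a \<Rightarrow> 'a"
  assumes J: "jordan_algebra jp" and u: "tripotent jp u"
  shows "jp (jp u u) u = u" "jp u (jp u u) = u" "jp (jp u u) (jp u u) = jp u u"
proof -
  note C = jbasic(2)[OF J]
  show 1: "jp (jp u u) u = u" using u unfolding tripotent_def triple_def by simp
  show 2: "jp u (jp u u) = u" using 1 C by metis
  show "jp (jp u u) (jp u u) = jp u u" using jbasic(3)[OF J, of u u] 2 by simp
qed

lemma part1:
  fixes jp :: "'a::real_vector \<Rightarrow> 'a \<Rightarrow> 'a"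
  assumes J: "jordan_algebra jp" and a: "jp a a = a" and u: "tripotent jp u"
    and au: "jp a u = (1/2) *\<^sub>R u"
  shows "jp (jp a (jp u u)) (jp a (jp u u)) = jp a (jp u u)"
    "jp (jp a (jp u u)) a = jp a (jp u u)"
    "jp a (jp a (jp u u)) = jp a (jp u u)"
    "jp (jp a (jp u u)) u = (1/2) *\<^sub>R u"
    "jp (jp a (jp u u)) (jp u u) = jp a (jp u u)"
    "jp (jp u u) (jp a (jp u u)) = jp a (jp u u)"
proof -
  note B = jbasic(1)[OF J] and C = jbasic(2)[OF J]
  define e where "e = jp u u"
  define p where "p = jp a e"
  have ee: "jp e e = e" and eu: "jp e u = u" and ue: "jp u e = u"
    using trip_basic[OF J u] unfolding e_def by auto
  have ua: "jp u a = (1/2) *\<^sub>R u" using au C by metis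
  have ap: "jp a p = p" using commL[OF J au, of a] a unfolding p_def e_def by simp
  then show "jp a (jp a (jp u u)) = jp a (jp u u)" unfolding p_def e_def .
  show "jp (jp a (jp u u)) a = jp a (jp u u)" using ap C unfolding p_def e_def by metis
  have pe: "jp p e = p" using commL[OF J au, of "jp u u"] ee unfolding p_def e_def by simp
  then show "jp (jp a (jp u u)) (jp u u) = jp a (jp u u)" unfolding p_def e_def .
  have ep: "jp e p = p" using pe C by metis
  then show "jp (jp u u) (jp a (jp u u)) = jp a (jp u u)" unfolding p_def e_def .
  have pa: "jp p a = p" using ap C by metis
  have ea: "jp e a = p" using C unfolding p_def by metis
  have "jp a e + 2 *\<^sub>R jp p p = p + 2 *\<^sub>R p"
    using D1'[OF J, of a a e] by (simp add: a ee ea ap ep ap[unfolded p_def] p_def[symmetric])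
  then have "jp p p = p" unfolding p_def by simp
  then show "jp (jp a (jp u u)) (jp a (jp u u)) = jp a (jp u u)" unfolding p_def e_def .
  have "jp (jp u a) (jp u u) = jp u (jp a (jp u u))" by (rule jbasic(3)[OF J])
  then have "jp u p = (1/2) *\<^sub>R u"
    by (simp add: ua bilinear_lmul[OF B] p_def e_def[symmetric] ue)
  then show "jp (jp a (jp u u)) u = (1/2) *\<^sub>R u" using C unfolding p_def e_def by metis
qed

lemma part3:
  fixes jp :: "'a::real_vector \<Rightarrow> 'a \<Rightarrow> 'a"
  assumes J: "jordan_algebra jp" and a: "jp a a = a" and u: "tripotent jp u"
    and au: "jp a u = (1/2) *\<^sub>R u" and v: "tripotent jp v"
    and av: "jp a v = (1/2) *\<^sub>R v" and o: "triple jp u v v = 0"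
  shows "jp (jp a (jp u u)) (jp a (jp v v)) = 0" "jp (jp a (jp u u)) v = 0"
    "jp u (jp a (jp v v)) = 0"
proof -
  note B = jbasic(1)[OF J] and C = jbasic(2)[OF J]
  have z1: "\<And>z. jp 0 z = 0" "\<And>z. jp z 0 = 0"
    using bilinear_lzero[OF B] bilinear_rzero[OF B] by auto
  define e where "e = jp u u"
  define f where "f = jp v v"
  define p where "p = jp a e"
  define q where "q = jp a f"
  have ee: "jp e e = e" and eu: "jp e u = u" and ue: "jp u e = u"
    using trip_basic[OF J u] unfolding e_def by auto
  have ff: "jp f f = f" and fv: "jp f v = v" and vf: "jp v f = v"
    using trip_basic[OF J v] unfolding f_def by auto
  have ua: "jp u a = (1/2) *\<^sub>R u" using au C by metis
  have va: "jp v a = (1/2) *\<^sub>R v" using av C by metis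
  have fu: "jp f u = 0" using o unfolding triple_def f_def by (simp add: C[of v u])
  have uf: "jp u f = 0" using fu C by metis
  have uv: "jp u v = 0" by (rule peirceA[OF J ff fu fv])
  have vu: "jp v u = 0" using uv C by metis
  have ef: "jp e f = 0"
    using D1'[OF J, of u u v] by (simp add: e_def[symmetric] f_def[symmetric] vu uf z1)
  have fe: "jp f e = 0" using ef C by metis
  have ev: "jp e v = 0" by (rule peirceA[OF J ff fe fv])
  have ve: "jp v e = 0" using ev C by metis
  have "jp v p = 0"
    using D1'[OF J, of v a u] by (simp add: e_def[symmetric] p_def[symmetric] va uv z1
      bilinear_lmul[OF B] ve)
  then show "jp (jp a (jp u u)) v = 0" using C unfolding p_def e_def by metis
  have "jp u q = 0"
    using D1'[OF J, of u a v] by (simp add: f_def[symmetric] q_def[symmetric] ua vu z1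
      bilinear_lmul[OF B] uf)
  then show "jp u (jp a (jp v v)) = 0" unfolding q_def f_def .
  have "jp q e = 0" using commL[OF J au, of f] unfolding q_def e_def by (simp add: fe[unfolded e_def] z1)
  then have eq: "jp e q = 0" using C by metis
  have ep: "jp e p = p" using part1(6)[OF J a u au] unfolding p_def e_def .
  have "jp q p = 0" by (rule peirceA[OF J ee eq ep])
  then show "jp (jp a (jp u u)) (jp a (jp v v)) = 0" using C unfolding p_def e_def q_def f_def by metis
qed

theorem proposition2p4:
  fixes jp :: "'a::banach \<Rightarrow> 'a \<Rightarrow> 'a" and e a u :: 'a
  assumes V: "unital_JB_algebra jp e"
    and a: "projection jp a"
    and u: "tripotent jp u" "u \<in> half_space jp a"
  shows "(let p = jp a (jp u u) in
            projection jp p \<and> proj_le jp p a \<and> u \<in> half_space jp p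
            \<and> jp p (jp u u) = p)
       \<and> (u \<noteq> 0 \<longrightarrow> jp a (jp u u) \<noteq> 0)
       \<and> (\<forall>v. tripotent jp v \<and> v \<in> half_space jp a \<and> orth_trip jp u v \<longrightarrow>
            (let p = jp a (jp u u); q = jp a (jp v v) in
               projection jp p \<and> projection jp q \<and> jp p q = 0
               \<and> jp p v = 0 \<and> jp u q = 0))"
proof -
  have J: "jordan_algebra jp" using V unfolding unital_JB_algebra_def JB_algebra_def by auto
  have aa: "jp a a = a" using a unfolding projection_def .
  have au: "jp a u = (1/2) *\<^sub>R u" using u(2) unfolding half_space_def by simp
  note P = part1[OF J aa u(1) au]
  have i: "let p = jp a (jp u u) in
            projection jp p \<and> proj_le jp p a \<and> u \<in> half_space jp p
            \<and> jp p (jp u u) = p"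
    using P unfolding Let_def projection_def proj_le_def half_space_def by simp
  have ii: "u \<noteq> 0 \<longrightarrow> jp a (jp u u) \<noteq> 0"
  proof
    assume "u \<noteq> 0"
    show "jp a (jp u u) \<noteq> 0"
    proof
      assume h: "jp a (jp u u) = 0"
      have "jp 0 u = 0" using bilinear_lzero[OF jbasic(1)[OF J]] by simp
      with P(4) h have "(1/2) *\<^sub>R u = 0" by simp
      with \<open>u \<noteq> 0\<close> show False by simp
    qed
  qed
  have iii: "\<forall>v. tripotent jp v \<and> v \<in> half_space jp a \<and> orth_trip jp u v \<longrightarrow>
            (let p = jp a (jp u u); q = jp a (jp v v) in
               projection jp p \<and> projection jp q \<and> jp p q = 0
               \<and> jp p v = 0 \<and> jp u q = 0)"
  proof (intro allI impI)
    fix v assume h: "tripotent jp v \<and> v \<in> half_space jp a \<and> orth_trip jp u v"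
    have v: "tripotent jp v" using h by simp
    have av: "jp a v = (1/2) *\<^sub>R v" using h unfolding half_space_def by simp
    have o: "triple jp u v v = 0" using h unfolding orth_trip_def by simp
    note Q = part1[OF J aa v av]
    note R = part3[OF J aa u(1) au v av o]
    show "let p = jp a (jp u u); q = jp a (jp v v) in
               projection jp p \<and> projection jp q \<and> jp p q = 0
               \<and> jp p v = 0 \<and> jp u q = 0"
      using P(1) Q(1) R unfolding Let_def projection_def by simp
  qed
  from i ii iii show ?thesis by blast
qed

end
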